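(* Every equilibrium of system $(\ast\ast)$ in the open cube $(0,1)^3$ (i.e. every point $(x^*,y^*,\tfrac12)\in(0,1)^3$ with $(1+\theta_1)x^*+(1+\theta_2)y^*=2$) is neutrally stable: it is Lyapunov stable but not asymptotically stable.
   Context: Modified Prisoner's Dilemma system. Fix constants $\delta_{PS_1}=P_1-S_1>0$, $\delta_{TR_1}=T_1-R_1>0$, $\delta_{PS_2}=P_2-S_2>0$, $\delta_{TR_2}=T_2-R_2>0$ and $\theta_1,\theta_2>0$. Put $\phi_1(y)=\delta_{PS_1}+(\delta_{TR_1}-\delta_{PS_1})y$ and $\phi_2(x)=\delta_{PS_2}+(\delta_{TR_2}-\delta_{PS_2})x$. System $(\ast\ast)$ on $[0,1]^3$ is $\dot x = x(1-x)\phi_1(y)(1-2r)$, $\dot y = y(1-y)\phi_2(x)(1-2r)$, $\dot r = r(1-r)[(1+\theta_1)x+(1+\theta_2)y-2]$. *)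

theory Defs
  imports "HOL-Analysis.Analysis"
begin

text \<open>The vector field of the modified Prisoner's Dilemma system (**), with
  parameters dPS1 = P1 - S1, dTR1 = T1 - R1, dPS2 = P2 - S2, dTR2 = T2 - R2,
  th1, th2.  States are triples (x, y, r).\<close>

definition phi :: "real \<Rightarrow> real \<Rightarrow> real \<Rightarrow> real" where
  "phi dPS dTR s = dPS + (dTR - dPS) * s"

definition pd_field ::
  "real \<Rightarrow> real \<Rightarrow> real \<Rightarrow> real \<Rightarrow> real \<Rightarrow> real \<Rightarrow> real \<times> real \<times> real \<Rightarrow> real \<times> real \<times> real" where
  "pd_field dPS1 dTR1 dPS2 dTR2 th1 th2 = (\<lambda>(x, y, r).
     (x * (1 - x) * phi dPS1 dTR1 y * (1 - 2 * r),
      y * (1 - y) * phi dPS2 dTR2 x * (1 - 2 * r),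
      r * (1 - r) * ((1 + th1) * x + (1 + th2) * y - 2)))"

definition is_solution :: "('a::real_normed_vector \<Rightarrow> 'a) \<Rightarrow> (real \<Rightarrow> 'a) \<Rightarrow> 'a \<Rightarrow> bool" where
  "is_solution F u x0 \<longleftrightarrow> u 0 = x0 \<and>
     (\<forall>t\<ge>0. (u has_vector_derivative F (u t)) (at t within {0..}))"

definition lyapunov_stable :: "('a::real_normed_vector \<Rightarrow> 'a) \<Rightarrow> 'a \<Rightarrow> bool" where
  "lyapunov_stable F p \<longleftrightarrow>
     (\<forall>\<epsilon>>0. \<exists>\<delta>>0. \<forall>x0. dist x0 p < \<delta> \<longrightarrow>
        (\<exists>u. is_solution F u x0) \<and>
        (\<forall>u. is_solution F u x0 \<longrightarrow> (\<forall>t\<ge>0. dist (u t) p < \<epsilon>)))"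

definition asymptotically_stable :: "('a::real_normed_vector \<Rightarrow> 'a) \<Rightarrow> 'a \<Rightarrow> bool" where
  "asymptotically_stable F p \<longleftrightarrow> lyapunov_stable F p \<and>
     (\<exists>\<delta>>0. \<forall>x0. dist x0 p < \<delta> \<longrightarrow>
        (\<forall>u. is_solution F u x0 \<longrightarrow> (u \<longlongrightarrow> p) at_top))"

definition neutrally_stable :: "('a::real_normed_vector \<Rightarrow> 'a) \<Rightarrow> 'a \<Rightarrow> bool" where
  "neutrally_stable F p \<longleftrightarrow> lyapunov_stable F p \<and> \<not> asymptotically_stable F p"

end

theory Submission
  imports Defs
begin

primrec pic :: "('a::banach \<Rightarrow> 'a) \<Rightarrow> 'a \<Rightarrow> nat \<Rightarrow> real \<Rightarrow> 'a" where
  "pic G x0 0 = (\<lambda>t. x0)"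
| "pic G x0 (Suc n) = (\<lambda>t. x0 + integral {0..t} (\<lambda>s. G (pic G x0 n s)))"

declare pic.simps(2)[simp del]

lemma pic_Suc: "pic G x0 (Suc n) t = x0 + integral {0..t} (\<lambda>s. G (pic G x0 n s))"
  by (simp add: pic.simps(2))

context
  fixes G :: "'a::banach \<Rightarrow> 'a" and K :: real and x0 :: 'a
  assumes K: "K > 0" and lip: "\<And>a b. norm (G a - G b) \<le> K * norm (a - b)"
begin

lemma contG: "continuous_on UNIV G"
  unfolding continuous_on_iff
proof (intro ballI allI impI)
  fix x x' and e :: real assume "e > 0"
  show "\<exists>d>0. \<forall>x'\<in>UNIV. dist x' x < d \<longrightarrow> dist (G x') (G x) < e"
  proof (intro exI[of _ "e / K"] conjI ballI impI)
    show "e / K > 0" using \<open>e>0\<close> K by simp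
    fix y assume "dist y x < e / K"
    then have "K * dist y x < e" using K by (simp add: field_simps)
    moreover have "dist (G y) (G x) \<le> K * dist y x" using lip[of y x] by (simp add: dist_norm)
    ultimately show "dist (G y) (G x) < e" by linarith
  qed
qed

lemma pic_cont: "continuous_on {0..T} (pic G x0 n)"
proof (induction n)
  case 0 then show ?case by simp
next
  case (Suc n)
  have "continuous_on {0..T} (\<lambda>s. G (pic G x0 n s))"
    using continuous_on_compose2[OF contG Suc] by auto
  then have "continuous_on {0..T} (\<lambda>t. integral {0..t} (\<lambda>s. G (pic G x0 n s)))"
    by (intro indefinite_integral_continuous_1 integrable_continuous_real)
  then show ?case by (simp add: continuous_on_add pic_Suc)
qed

lemma pic_Gcont: "continuous_on {0..T} (\<lambda>s. G (pic G x0 n s))"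
  using continuous_on_compose2[OF contG pic_cont] by auto

lemma pic_int: "(\<lambda>s. G (pic G x0 n s)) integrable_on {0..T}"
  by (intro integrable_continuous_real pic_Gcont)

lemma int_pow:
  assumes "0 \<le> t"
  shows "integral {0..t} (\<lambda>s. c * s ^ n) = c * t ^ Suc n / real (Suc n)"
proof -
  have "((\<lambda>s. c * s ^ n) has_integral ((\<lambda>s. c * s ^ Suc n / real (Suc n)) t - (\<lambda>s. c * s ^ Suc n / real (Suc n)) 0)) {0..t}"
  proof (rule fundamental_theorem_of_calculus[OF assms])
    fix s :: real
    have "((\<lambda>s. c * s ^ Suc n / real (Suc n)) has_real_derivative c * (real (Suc n) * s ^ (Suc n - Suc 0)) / real (Suc n)) (at s)"
      by (intro DERIV_cdivide DERIV_cmult DERIV_pow)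
    then have "((\<lambda>s. c * s ^ Suc n / real (Suc n)) has_real_derivative c * s ^ n) (at s)"
      by simp
    then show "((\<lambda>s. c * s ^ Suc n / real (Suc n)) has_vector_derivative c * s ^ n) (at s within {0..t})"
      by (simp add: has_real_derivative_iff_has_vector_derivative has_vector_derivative_at_within)
  qed
  then have "integral {0..t} (\<lambda>s. c * s ^ n) = (\<lambda>s. c * s ^ Suc n / real (Suc n)) t - (\<lambda>s. c * s ^ Suc n / real (Suc n)) 0"
    by (rule integral_unique)
  then show ?thesis by simp
qed

lemma pic_bound:
  assumes "0 \<le> t"
  shows "norm (pic G x0 (Suc n) t - pic G x0 n t) \<le> norm (G x0) * K ^ n * t ^ Suc n / fact (Suc n)"
  using assms
proof (induction n arbitrary: t)
  case 0
  then show ?case by (simp add: pic_Suc)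
next
  case (Suc n)
  let ?M = "norm (G x0)"
  have "pic G x0 (Suc (Suc n)) t - pic G x0 (Suc n) t
      = integral {0..t} (\<lambda>s. G (pic G x0 (Suc n) s) - G (pic G x0 n s))"
    unfolding pic_Suc[of G x0 "Suc n" t] pic_Suc[of G x0 n t]
    by (simp add: integral_diff pic_int)
  also have "norm \<dots> \<le> integral {0..t} (\<lambda>s. (K * ?M * K ^ n / fact (Suc n)) * s ^ Suc n)"
  proof (rule integral_norm_bound_integral)
    show "(\<lambda>s. G (pic G x0 (Suc n) s) - G (pic G x0 n s)) integrable_on {0..t}"
      by (intro integrable_diff pic_int)
    show "(\<lambda>s. (K * ?M * K ^ n / fact (Suc n)) * s ^ Suc n) integrable_on {0..t}"
      by (intro integrable_continuous_real continuous_intros)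
    fix s assume s: "s \<in> {0..t}"
    have "norm (G (pic G x0 (Suc n) s) - G (pic G x0 n s)) \<le> K * norm (pic G x0 (Suc n) s - pic G x0 n s)"
      by (rule lip)
    also have "\<dots> \<le> K * (?M * K ^ n * s ^ Suc n / fact (Suc n))"
      using Suc.IH[of s] s K by (intro mult_left_mono) auto
    finally show "norm (G (pic G x0 (Suc n) s) - G (pic G x0 n s)) \<le> (K * ?M * K ^ n / fact (Suc n)) * s ^ Suc n"
      by simp
  qed
  also have "\<dots> = (K * ?M * K ^ n / fact (Suc n)) * t ^ Suc (Suc n) / real (Suc (Suc n))"
    using Suc.prems by (rule int_pow)
  also have "\<dots> = ?M * K ^ Suc n * t ^ Suc (Suc n) / fact (Suc (Suc n))"
    by (simp add: field_simps)
  finally show ?case .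
qed

definition "usol t = x0 + (\<Sum>n. pic G x0 (Suc n) t - pic G x0 n t)"

lemma usol_unif: "uniform_limit {0..T} (pic G x0) usol sequentially"
proof -
  let ?M = "norm (G x0)"
  let ?B = "\<lambda>n. (?M / K) * ((K * \<bar>T\<bar>) ^ Suc n /\<^sub>R fact (Suc n))"
  have sB: "summable ?B"
    apply (rule summable_mult)
    using summable_exp_generic[of "K * \<bar>T\<bar>"] by (subst summable_Suc_iff)
  have "uniform_limit {0..T} (\<lambda>N t. \<Sum>n<N. pic G x0 (Suc n) t - pic G x0 n t)
      (\<lambda>t. \<Sum>n. pic G x0 (Suc n) t - pic G x0 n t) sequentially"
  proof (rule Weierstrass_m_test[OF _ sB])
    fix n t assume t: "t \<in> {0..T}"
    have "norm (pic G x0 (Suc n) t - pic G x0 n t) \<le> ?M * K ^ n * t ^ Suc n / fact (Suc n)"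
      using t by (intro pic_bound) auto
    also have "\<dots> \<le> ?M * K ^ n * \<bar>T\<bar> ^ Suc n / fact (Suc n)"
      using t K by (intro divide_right_mono mult_left_mono power_mono) auto
    also have "\<dots> = ?B n" using K by (simp add: field_simps power_mult_distrib)
    finally show "norm (pic G x0 (Suc n) t - pic G x0 n t) \<le> ?B n" .
  qed
  then have "uniform_limit {0..T} (\<lambda>N t. x0 + (\<Sum>n<N. pic G x0 (Suc n) t - pic G x0 n t))
      (\<lambda>t. x0 + (\<Sum>n. pic G x0 (Suc n) t - pic G x0 n t)) sequentially"
    by (intro uniform_limit_add uniform_limit_const)
  moreover have "(\<lambda>N t. x0 + (\<Sum>n<N. pic G x0 (Suc n) t - pic G x0 n t)) = pic G x0"
  proof (intro ext)
    fix N t show "x0 + (\<Sum>n<N. pic G x0 (Suc n) t - pic G x0 n t) = pic G x0 N t"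
      using sum_lessThan_telescope[of "\<lambda>n. pic G x0 n t" N] by simp
  qed
  ultimately show ?thesis
    by (simp add: usol_def[abs_def])
qed

lemma usol_cont: "continuous_on {0..T} usol"
  using pic_cont by (intro uniform_limit_theorem[OF always_eventually usol_unif]) auto

lemma usol_eq:
  assumes t: "0 \<le> t"
  shows "usol t = x0 + integral {0..t} (\<lambda>s. G (usol s))"
proof -
  have ul: "uniform_limit {0..t} (pic G x0) usol sequentially" by (rule usol_unif)
  have l1: "(\<lambda>n. pic G x0 (Suc n) t) \<longlonglongrightarrow> usol t"
    using LIMSEQ_Suc[OF tendsto_uniform_limitI[OF ul, of t]] t by simp
  have Gu: "continuous_on {0..t} (\<lambda>s. G (usol s))"
    using continuous_on_compose2[OF contG usol_cont] by auto
  have l2: "(\<lambda>n. x0 + integral {0..t} (\<lambda>s. G (pic G x0 n s))) \<longlonglongrightarrow> x0 + integral {0..t} (\<lambda>s. G (usol s))"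
  proof (intro tendsto_add tendsto_const, rule LIMSEQ_I)
    fix e :: real assume e: "e > 0"
    define e' where "e' = e / (2 * K * (t + 1))"
    have e': "e' > 0" using e K t by (simp add: e'_def)
    obtain N where N: "\<And>n. n \<ge> N \<Longrightarrow> \<forall>s\<in>{0..t}. dist (pic G x0 n s) (usol s) < e'"
      using uniform_limitD[OF ul e'] by (auto simp: eventually_sequentially)
    show "\<exists>N. \<forall>n\<ge>N. norm (integral {0..t} (\<lambda>s. G (pic G x0 n s)) - integral {0..t} (\<lambda>s. G (usol s))) < e"
    proof (intro exI allI impI)
      fix n assume n: "n \<ge> N"
      have "integral {0..t} (\<lambda>s. G (pic G x0 n s)) - integral {0..t} (\<lambda>s. G (usol s))
          = integral {0..t} (\<lambda>s. G (pic G x0 n s) - G (usol s))"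
        using Gu by (simp add: integral_diff pic_int integrable_continuous_real)
      moreover have "norm (integral {0..t} (\<lambda>s. G (pic G x0 n s) - G (usol s))) \<le> (K * e') * Henstock_Kurzweil_Integration.content {0..t}"
      proof (rule has_integral_bound_real[where S="{}"])
        show "0 \<le> K * e'" using K e' by simp
        show "((\<lambda>s. G (pic G x0 n s) - G (usol s)) has_integral integral {0..t} (\<lambda>s. G (pic G x0 n s) - G (usol s))) {0..t}"
          using Gu by (intro integrable_integral integrable_diff pic_int integrable_continuous_real)
        fix s assume s: "s \<in> {0..t} - {}"
        have "norm (G (pic G x0 n s) - G (usol s)) \<le> K * norm (pic G x0 n s - usol s)" by (rule lip)
        also have "\<dots> \<le> K * e'"
        proof -
          have "norm (pic G x0 n s - usol s) < e'" using N[OF n] s by (auto simp: dist_norm)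
          then show ?thesis using K by (intro mult_left_mono) auto
        qed
        finally show "norm (G (pic G x0 n s) - G (usol s)) \<le> K * e'" .
      qed auto
      moreover have "(K * e') * Henstock_Kurzweil_Integration.content {0..t} < e"
      proof -
        have "(K * e') * Henstock_Kurzweil_Integration.content {0..t} = e * t / (2 * (t + 1))"
          using t K by (simp add: e'_def)
        also have "\<dots> < e"
        proof -
          have "e * t < e * (2 * (t + 1))" using t e by (intro mult_strict_left_mono) auto
          then show ?thesis using t by (subst pos_divide_less_eq) (auto simp: mult.commute)
        qed
        finally show ?thesis .
      qed
      ultimately show "norm (integral {0..t} (\<lambda>s. G (pic G x0 n s)) - integral {0..t} (\<lambda>s. G (usol s))) < e"
        by simp
    qed
  qed
  have "(\<lambda>n. pic G x0 (Suc n) t) \<longlonglongrightarrow> x0 + integral {0..t} (\<lambda>s. G (usol s))"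
    using l2 by (simp add: pic_Suc)
  then show ?thesis using l1 LIMSEQ_unique by blast
qed

lemma picard_exists:
  "\<exists>u. u 0 = x0 \<and> (\<forall>t\<ge>0. (u has_vector_derivative G (u t)) (at t within {0..}))"
proof (intro exI conjI allI impI)
  show "usol 0 = x0" using usol_eq[of 0] by simp
  fix t :: real assume t: "t \<ge> 0"
  have Gu: "continuous_on {0..t+1} (\<lambda>s. G (usol s))"
    using continuous_on_compose2[OF contG usol_cont] by auto
  have "((\<lambda>s. x0 + integral {0..s} (\<lambda>s. G (usol s))) has_vector_derivative G (usol t)) (at t within {0..t+1})"
    using integral_has_vector_derivative[OF Gu, of t] t
    by (auto intro!: derivative_eq_intros)
  then have "(usol has_vector_derivative G (usol t)) (at t within {0..t+1})"
    by (rule has_vector_derivative_transform[rotated 2]) (use t usol_eq in auto)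
  moreover have "at t within {0..} = at t within {0..t+1}"
    by (rule at_within_nhd[where S="{..<t+1}"]) auto
  ultimately show "(usol has_vector_derivative G (usol t)) (at t within {0..})" by simp
qed

end



definition Lg :: "real \<Rightarrow> real \<Rightarrow> real \<Rightarrow> real" where
  "Lg a b x = a * ln x - b * ln (1 - x)"

definition Li :: "real \<Rightarrow> real \<Rightarrow> real \<Rightarrow> real" where
  "Li a b s = (THE x. 0 < x \<and> x < 1 \<and> Lg a b x = s)"

lemma ln_diff_ge:
  fixes u v :: real
  assumes "0 < u" "u \<le> v"
  shows "ln v - ln u \<ge> (v - u) / v"
proof -
  have "0 < u / v" using assms by (intro divide_pos_pos) auto
  then have "ln (u / v) \<le> u / v - 1" by (rule ln_le_minus_one)
  then have "ln u - ln v \<le> u / v - 1" using assms by (simp add: ln_div)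
  moreover have "u / v - 1 = - ((v - u) / v)" using assms by (simp add: field_simps)
  ultimately show ?thesis by linarith
qed

context
  fixes a b :: real assumes ab: "a > 0" "b > 0"
begin

lemma Lg_mono_bound:
  assumes "0 < u" "u \<le> v" "v < 1"
  shows "Lg a b v - Lg a b u \<ge> (a + b) * (v - u)"
proof -
  have 1: "ln v - ln u \<ge> v - u"
  proof -
    have "(v - u) * v \<le> v - u" using mult_left_le[of v "v - u"] assms by auto
    then have "(v - u) / v \<ge> v - u" using assms by (simp add: le_divide_eq)
    then show ?thesis using ln_diff_ge[OF assms(1,2)] by linarith
  qed
  have 2: "ln (1 - u) - ln (1 - v) \<ge> v - u"
  proof -
    have "(v - u) / (1 - u) \<ge> v - u"
      using assms by (simp add: field_simps)
    moreover have "((1 - u) - (1 - v)) / (1 - u) \<le> ln (1 - u) - ln (1 - v)"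
      using ln_diff_ge[of "1 - v" "1 - u"] assms by auto
    then have "(v - u) / (1 - u) \<le> ln (1 - u) - ln (1 - v)" by simp
    ultimately show ?thesis by linarith
  qed
  have "Lg a b v - Lg a b u = a * (ln v - ln u) + b * (ln (1 - u) - ln (1 - v))"
    by (simp add: Lg_def algebra_simps)
  also have "\<dots> \<ge> a * (v - u) + b * (v - u)"
    using 1 2 ab by (intro add_mono mult_left_mono) auto
  finally show ?thesis by (simp add: algebra_simps)
qed

lemma Lg_strict: "0 < u \<Longrightarrow> u < v \<Longrightarrow> v < 1 \<Longrightarrow> Lg a b u < Lg a b v"
  using Lg_mono_bound[of u v] ab by (smt (verit) mult_pos_pos)

lemma Lg_inj: "0 < u \<Longrightarrow> u < 1 \<Longrightarrow> 0 < v \<Longrightarrow> v < 1 \<Longrightarrow> Lg a b u = Lg a b v \<Longrightarrow> u = v"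
  using Lg_strict[of u v] Lg_strict[of v u] by fastforce

lemma Lg_cont: "0 < u \<Longrightarrow> v < 1 \<Longrightarrow> continuous_on {u..v} (Lg a b)"
  unfolding Lg_def by (intro continuous_intros) auto

lemma Lg_surj: "\<exists>x. 0 < x \<and> x < 1 \<and> Lg a b x = s"
proof -
  define u where "u = min (1/2) (exp ((s - b * ln 2 - 1) / a))"
  define v where "v = 1 - min (1/2) (exp (- (s + a * ln 2 + 1) / b))"
  have u: "0 < u" "u \<le> 1/2" by (auto simp: u_def)
  have v: "1/2 \<le> v" "v < 1" by (auto simp: v_def)
  have "Lg a b u \<le> s"
  proof -
    have "u \<le> exp ((s - b * ln 2 - 1) / a)" by (simp add: u_def)
    then have "ln u \<le> ln (exp ((s - b * ln 2 - 1) / a))" using u by (subst ln_le_cancel_iff) auto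
    then have "ln u \<le> (s - b * ln 2 - 1) / a" by simp
    then have "a * ln u \<le> s - b * ln 2 - 1" using ab by (simp add: field_simps)
    moreover have "- ln (1 - u) \<le> ln 2"
    proof -
      have "ln (1/2) \<le> ln (1 - u)" using u by (subst ln_le_cancel_iff) auto
      then show ?thesis by (simp add: ln_div)
    qed
    then have "b * (- ln (1 - u)) \<le> b * ln 2" using ab by (intro mult_left_mono) auto
    ultimately show ?thesis unfolding Lg_def by (simp add: algebra_simps)
  qed
  moreover have "s \<le> Lg a b v"
  proof -
    have w: "1 - v = min (1/2) (exp (- (s + a * ln 2 + 1) / b))" by (simp add: v_def)
    have "1 - v \<le> exp (- (s + a * ln 2 + 1) / b)" unfolding w by simp
    then have "ln (1 - v) \<le> ln (exp (- (s + a * ln 2 + 1) / b))" using v by (subst ln_le_cancel_iff) auto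
    then have "ln (1 - v) \<le> - (s + a * ln 2 + 1) / b" by simp
    then have "b * ln (1 - v) \<le> - (s + a * ln 2 + 1)" using ab by (simp add: field_simps)
    moreover have "- ln 2 \<le> ln v"
    proof -
      have "ln (1/2) \<le> ln v" using v by (subst ln_le_cancel_iff) auto
      then show ?thesis by (simp add: ln_div)
    qed
    then have "a * (- ln 2) \<le> a * ln v" using ab by (intro mult_left_mono) auto
    ultimately show ?thesis unfolding Lg_def by (simp add: algebra_simps)
  qed
  ultimately obtain x where "u \<le> x" "x \<le> v" "Lg a b x = s"
    using IVT'[of "Lg a b" u s v] Lg_cont[of u v] u v by auto
  then show ?thesis using u v by (intro exI[of _ x]) auto
qed

lemma Li: "0 < Li a b s \<and> Li a b s < 1 \<and> Lg a b (Li a b s) = s"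
proof -
  obtain x where x: "0 < x \<and> x < 1 \<and> Lg a b x = s" using Lg_surj by blast
  show ?thesis unfolding Li_def
    by (rule theI[of _ x]) (use x Lg_inj in blast)+
qed

lemma Li_Lg: "0 < x \<Longrightarrow> x < 1 \<Longrightarrow> Li a b (Lg a b x) = x"
  using Li[of "Lg a b x"] Lg_inj by blast

lemma Li_strict: "s < s' \<Longrightarrow> Li a b s < Li a b s'"
  using Li[of s] Li[of s'] Lg_strict[of "Li a b s'" "Li a b s"]
  by (metis linorder_neqE_linordered_idom order_less_asym)

lemma Li_lip: "\<bar>Li a b s - Li a b s'\<bar> \<le> \<bar>s - s'\<bar> / (a + b)"
proof -
  have *: "Li a b s' - Li a b s \<le> (s' - s) / (a + b)" if "s \<le> s'" for s s'
  proof -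
    have le: "Li a b s \<le> Li a b s'" using Li_strict[of s s'] that by (cases "s = s'") auto
    have "(a + b) * (Li a b s' - Li a b s) \<le> Lg a b (Li a b s') - Lg a b (Li a b s)"
      using Lg_mono_bound[OF _ le] Li by auto
    then show ?thesis using Li ab by (simp add: field_simps)
  qed
  show ?thesis
  proof (cases "s \<le> s'")
    case True
    then show ?thesis using *[OF True] Li_strict[of s s'] by (cases "s = s'") (auto simp: abs_if)
  next
    case False
    then show ?thesis using *[of s' s] Li_strict[of s' s] by (auto simp: abs_if)
  qed
qed

lemma Li_cont: "continuous_on UNIV (Li a b)"
  unfolding continuous_on_iff
proof (intro ballI allI impI)
  fix x and e :: real assume "e > 0"
  show "\<exists>d>0. \<forall>x'\<in>UNIV. dist x' x < d \<longrightarrow> dist (Li a b x') (Li a b x) < e"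
  proof (intro exI[of _ "e * (a + b)"] conjI ballI impI)
    show "e * (a + b) > 0" using \<open>e>0\<close> ab by simp
    fix y assume "dist y x < e * (a + b)"
    then have "\<bar>y - x\<bar> / (a + b) < e" using ab by (simp add: dist_real_def field_simps)
    then show "dist (Li a b y) (Li a b x) < e" using Li_lip[of y x] by (simp add: dist_real_def)
  qed
qed

lemma Lg_deriv:
  assumes "0 < x" "x < 1"
  shows "(Lg a b has_real_derivative phi a b x / (x * (1 - x))) (at x)"
proof -
  have "(Lg a b has_real_derivative a * inverse x - b * (- 1 / (1 - x))) (at x)"
    unfolding Lg_def using assms by (auto intro!: derivative_eq_intros simp: divide_inverse)
  moreover have "a * inverse x - b * (- 1 / (1 - x)) = phi a b x / (x * (1 - x))"
    using assms by (simp add: phi_def field_simps)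
  ultimately show ?thesis by simp
qed

end



lemma norm3_le: "norm ((a::real, b::real, c::real)) \<le> \<bar>a\<bar> + \<bar>b\<bar> + \<bar>c\<bar>"
proof -
  have "norm (a, b, c) \<le> norm a + norm (b, c)" by (rule norm_Pair_le)
  also have "norm (b, c) \<le> norm b + norm c" by (rule norm_Pair_le)
  finally show ?thesis by simp
qed

lemma abs3_le1: "\<bar>a\<bar> \<le> norm (a::real, b::real, c::real)"
  using norm_fst_le[of a "(b, c)"] by simp
lemma abs3_le2: "\<bar>b\<bar> \<le> norm (a::real, b::real, c::real)"
  using norm_fst_le[of b c] norm_snd_le[of "(b, c)" a] by simp
lemma abs3_le3: "\<bar>c\<bar> \<le> norm (a::real, b::real, c::real)"
  using norm_snd_le[of c b] norm_snd_le[of "(b, c)" a] by simp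

lemma prod2_le:
  fixes a1 a2 b1 b2 :: real
  shows "\<bar>a1 * b1 - a2 * b2\<bar> \<le> \<bar>a1 - a2\<bar> * \<bar>b1\<bar> + \<bar>a2\<bar> * \<bar>b1 - b2\<bar>"
proof -
  have "a1 * b1 - a2 * b2 = (a1 - a2) * b1 + a2 * (b1 - b2)" by algebra
  then have "\<bar>a1 * b1 - a2 * b2\<bar> \<le> \<bar>(a1 - a2) * b1\<bar> + \<bar>a2 * (b1 - b2)\<bar>" by simp
  then show ?thesis by (simp add: abs_mult)
qed

lemma prod_bound:
  fixes a1 a2 b1 b2 A B :: real
  assumes "\<bar>b1\<bar> \<le> B" "\<bar>a2\<bar> \<le> A" "\<bar>a1 - a2\<bar> \<le> da" "\<bar>b1 - b2\<bar> \<le> db"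
  shows "\<bar>a1 * b1 - a2 * b2\<bar> \<le> da * B + A * db"
proof -
  have "\<bar>a1 - a2\<bar> * \<bar>b1\<bar> \<le> da * B" using assms by (intro mult_mono) auto
  moreover have "\<bar>a2\<bar> * \<bar>b1 - b2\<bar> \<le> A * db" using assms by (intro mult_mono) auto
  ultimately show ?thesis using prod2_le[of a1 b1 a2 b2] by linarith
qed

lemma quad_lip: fixes x x' :: real shows "0 \<le> x \<Longrightarrow> x \<le> 1 \<Longrightarrow> 0 \<le> x' \<Longrightarrow> x' \<le> 1 \<Longrightarrow> \<bar>x * (1 - x) - x' * (1 - x')\<bar> \<le> \<bar>x - x'\<bar>"
proof -
  assume a: "0 \<le> x" "x \<le> 1" "0 \<le> x'" "x' \<le> 1"
  have "x * (1 - x) - x' * (1 - x') = (x - x') * (1 - x - x')" by algebra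
  moreover have "\<bar>1 - x - x'\<bar> \<le> 1" using a by auto
  ultimately show ?thesis by (simp add: abs_mult mult_left_le)
qed

lemma quad_bd: fixes x :: real shows "0 \<le> x \<Longrightarrow> x \<le> 1 \<Longrightarrow> \<bar>x * (1 - x)\<bar> \<le> 1"
  by (simp add: abs_mult mult_le_one)

definition cl :: "real \<Rightarrow> real" where "cl z = max 0 (min 1 z)"

lemma cl: "0 \<le> cl z" "cl z \<le> 1" "\<bar>cl z - cl w\<bar> \<le> \<bar>z - w\<bar>" "0 \<le> z \<Longrightarrow> z \<le> 1 \<Longrightarrow> cl z = z"
  by (auto simp: cl_def)

definition cl3 :: "real \<times> real \<times> real \<Rightarrow> real \<times> real \<times> real" where
  "cl3 q = (cl (fst q), cl (fst (snd q)), cl (snd (snd q)))"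

lemma phi_bounds:
  assumes "dPS > 0" "dTR > 0" "0 \<le> s" "s \<le> 1"
  shows "min dPS dTR \<le> phi dPS dTR s" "phi dPS dTR s \<le> dPS + dTR"
proof -
  have e: "phi dPS dTR s = dPS * (1 - s) + dTR * s" by (simp add: phi_def algebra_simps)
  have "min dPS dTR * (1 - s) + min dPS dTR * s \<le> dPS * (1 - s) + dTR * s"
    using assms by (intro add_mono mult_right_mono) auto
  then show "min dPS dTR \<le> phi dPS dTR s" unfolding e by (simp add: algebra_simps)
  have "dPS * (1 - s) + dTR * s \<le> (dPS + dTR) * (1 - s) + (dPS + dTR) * s"
    using assms by (intro add_mono mult_right_mono) auto
  then show "phi dPS dTR s \<le> dPS + dTR" unfolding e by (simp add: algebra_simps)
qed

lemma phi_lip: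
  assumes "dPS > 0" "dTR > 0"
  shows "\<bar>phi dPS dTR s - phi dPS dTR s'\<bar> \<le> (dPS + dTR) * \<bar>s - s'\<bar>"
proof -
  have "phi dPS dTR s - phi dPS dTR s' = (dTR - dPS) * (s - s')" by (simp add: phi_def algebra_simps)
  moreover have "\<bar>dTR - dPS\<bar> \<le> dPS + dTR" using assms by auto
  ultimately show ?thesis by (simp add: abs_mult mult_right_mono)
qed

locale pd =
  fixes dPS1 dTR1 dPS2 dTR2 th1 th2 xs ys :: real
  assumes pos: "dPS1 > 0" "dTR1 > 0" "dPS2 > 0" "dTR2 > 0" "th1 > 0" "th2 > 0"
    and eq: "0 < xs" "xs < 1" "0 < ys" "ys < 1"
    and eqL: "(1 + th1) * xs + (1 + th2) * ys = 2"
begin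

abbreviation "F \<equiv> pd_field dPS1 dTR1 dPS2 dTR2 th1 th2"

lemma F_eval: "F (x, y, r) = (x * (1 - x) * phi dPS1 dTR1 y * (1 - 2 * r),
      y * (1 - y) * phi dPS2 dTR2 x * (1 - 2 * r),
      r * (1 - r) * ((1 + th1) * x + (1 + th2) * y - 2))"
  by (simp add: pd_field_def)

definition "A1 = dPS1 + dTR1"
definition "A2 = dPS2 + dTR2"
definition "A3 = 2 + th1 + th2"
definition "KF = 2 * A1 + 2 * A2 + 2 * A3"

lemma KF_pos: "KF > 0" using pos by (simp add: KF_def A1_def A2_def A3_def)

lemma comp1_lip:
  fixes dPS dTR x y r x' y' r' :: real
  assumes p: "dPS > 0" "dTR > 0"
    and b: "0 \<le> x" "x \<le> 1" "0 \<le> y" "y \<le> 1" "0 \<le> r" "r \<le> 1"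
       "0 \<le> x'" "x' \<le> 1" "0 \<le> y'" "y' \<le> 1" "0 \<le> r'" "r' \<le> 1"
  shows "\<bar>x * (1 - x) * phi dPS dTR y * (1 - 2 * r) - x' * (1 - x') * phi dPS dTR y' * (1 - 2 * r')\<bar>
     \<le> 2 * (dPS + dTR) * (\<bar>x - x'\<bar> + \<bar>y - y'\<bar> + \<bar>r - r'\<bar>)"
proof -
  let ?A = "dPS + dTR"
  have pb: "\<bar>phi dPS dTR y\<bar> \<le> ?A" using phi_bounds[OF p b(3,4)] p by auto
  have pb': "\<bar>phi dPS dTR y'\<bar> \<le> ?A" using phi_bounds[OF p b(9,10)] p by auto
  have s1: "\<bar>x * (1 - x) * phi dPS dTR y - x' * (1 - x') * phi dPS dTR y'\<bar> \<le> \<bar>x - x'\<bar> * ?A + 1 * (?A * \<bar>y - y'\<bar>)"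
    by (rule prod_bound[OF pb quad_bd[OF b(7,8)] quad_lip[OF b(1,2,7,8)] phi_lip[OF p]])
  have c1: "\<bar>1 - 2 * r\<bar> \<le> 1" using b by arith
  have c2: "\<bar>(1 - 2 * r) - (1 - 2 * r')\<bar> \<le> 2 * \<bar>r - r'\<bar>" by (cases "r \<le> r'") auto
  note c = c1 c2
  have xb: "\<bar>x' * (1 - x') * phi dPS dTR y'\<bar> \<le> ?A"
    using mult_mono[OF quad_bd[OF b(7,8)] pb'] by (simp add: abs_mult)
  have "\<bar>x * (1 - x) * phi dPS dTR y * (1 - 2 * r) - x' * (1 - x') * phi dPS dTR y' * (1 - 2 * r')\<bar>
      \<le> (\<bar>x - x'\<bar> * ?A + 1 * (?A * \<bar>y - y'\<bar>)) * 1 + ?A * (2 * \<bar>r - r'\<bar>)"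
    by (rule prod_bound[OF c(1) xb s1 c(2)])
  also have "\<dots> \<le> 2 * ?A * (\<bar>x - x'\<bar> + \<bar>y - y'\<bar> + \<bar>r - r'\<bar>)"
    using p by (simp add: algebra_simps)
  finally show ?thesis .
qed

lemma F_lip:
  assumes b: "0 \<le> x" "x \<le> 1" "0 \<le> y" "y \<le> 1" "0 \<le> r" "r \<le> 1"
       "0 \<le> x'" "x' \<le> 1" "0 \<le> y'" "y' \<le> 1" "0 \<le> r'" "r' \<le> 1"
  shows "norm (F (x, y, r) - F (x', y', r')) \<le> KF * (\<bar>x - x'\<bar> + \<bar>y - y'\<bar> + \<bar>r - r'\<bar>)"
proof -
  let ?d = "\<bar>x - x'\<bar> + \<bar>y - y'\<bar> + \<bar>r - r'\<bar>"
  have 1: "\<bar>x * (1 - x) * phi dPS1 dTR1 y * (1 - 2 * r) - x' * (1 - x') * phi dPS1 dTR1 y' * (1 - 2 * r')\<bar> \<le> 2 * A1 * ?d"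
    unfolding A1_def by (rule comp1_lip[OF pos(1,2) b])
  have 2: "\<bar>y * (1 - y) * phi dPS2 dTR2 x * (1 - 2 * r) - y' * (1 - y') * phi dPS2 dTR2 x' * (1 - 2 * r')\<bar> \<le> 2 * A2 * ?d"
    using comp1_lip[OF pos(3,4) b(3,4,1,2,5,6,9,10,7,8,11,12)] unfolding A2_def by (simp add: algebra_simps)
  have Lb: "\<bar>(1 + th1) * x + (1 + th2) * y - 2\<bar> \<le> A3"
  proof -
    have "(1 + th1) * x \<le> 1 + th1" "(1 + th2) * y \<le> 1 + th2" "0 \<le> (1 + th1) * x" "0 \<le> (1 + th2) * y"
      using b pos by (auto simp: mult_left_le)
    then show ?thesis using pos unfolding A3_def abs_le_iff by linarith
  qed
  have Ld: "\<bar>((1 + th1) * x + (1 + th2) * y - 2) - ((1 + th1) * x' + (1 + th2) * y' - 2)\<bar> \<le> A3 * ?d"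
  proof -
    have "\<bar>((1 + th1) * x + (1 + th2) * y - 2) - ((1 + th1) * x' + (1 + th2) * y' - 2)\<bar>
        \<le> (1 + th1) * \<bar>x - x'\<bar> + (1 + th2) * \<bar>y - y'\<bar>"
    proof -
      have "((1 + th1) * x + (1 + th2) * y - 2) - ((1 + th1) * x' + (1 + th2) * y' - 2) = (1 + th1) * (x - x') + (1 + th2) * (y - y')"
        by (simp add: algebra_simps)
      moreover have "\<bar>(1 + th1) * (x - x') + (1 + th2) * (y - y')\<bar> \<le> \<bar>(1 + th1) * (x - x')\<bar> + \<bar>(1 + th2) * (y - y')\<bar>"
        by (rule abs_triangle_ineq)
      ultimately show ?thesis using pos by (simp add: abs_mult)
    qed
    also have "\<dots> \<le> A3 * \<bar>x - x'\<bar> + A3 * \<bar>y - y'\<bar>"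
      using pos by (intro add_mono mult_right_mono) (auto simp: A3_def)
    also have "\<dots> \<le> A3 * ?d" using pos by (simp add: A3_def algebra_simps)
    finally show ?thesis .
  qed
  have 3: "\<bar>r * (1 - r) * ((1 + th1) * x + (1 + th2) * y - 2) - r' * (1 - r') * ((1 + th1) * x' + (1 + th2) * y' - 2)\<bar>
     \<le> \<bar>r - r'\<bar> * A3 + 1 * (A3 * ?d)"
    by (rule prod_bound[OF Lb quad_bd[OF b(11,12)] quad_lip[OF b(5,6,11,12)] Ld])
  have "norm (F (x, y, r) - F (x', y', r')) \<le> 2 * A1 * ?d + 2 * A2 * ?d + (\<bar>r - r'\<bar> * A3 + 1 * (A3 * ?d))"
  proof -
    have eqF: "F (x, y, r) - F (x', y', r') = (x * (1 - x) * phi dPS1 dTR1 y * (1 - 2 * r) - x' * (1 - x') * phi dPS1 dTR1 y' * (1 - 2 * r'),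
       y * (1 - y) * phi dPS2 dTR2 x * (1 - 2 * r) - y' * (1 - y') * phi dPS2 dTR2 x' * (1 - 2 * r'),
       r * (1 - r) * ((1 + th1) * x + (1 + th2) * y - 2) - r' * (1 - r') * ((1 + th1) * x' + (1 + th2) * y' - 2))"
      by (simp add: F_eval)
    have "norm (F (x, y, r) - F (x', y', r')) \<le> \<bar>x * (1 - x) * phi dPS1 dTR1 y * (1 - 2 * r) - x' * (1 - x') * phi dPS1 dTR1 y' * (1 - 2 * r')\<bar> +
       \<bar>y * (1 - y) * phi dPS2 dTR2 x * (1 - 2 * r) - y' * (1 - y') * phi dPS2 dTR2 x' * (1 - 2 * r')\<bar> +
       \<bar>r * (1 - r) * ((1 + th1) * x + (1 + th2) * y - 2) - r' * (1 - r') * ((1 + th1) * x' + (1 + th2) * y' - 2)\<bar>"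
      unfolding eqF by (rule norm3_le)
    then show ?thesis using 1 2 3 by linarith
  qed
  also have "\<dots> \<le> 2 * A1 * ?d + 2 * A2 * ?d + 2 * (A3 * ?d)"
    using pos by (simp add: A3_def)
  also have "\<dots> = KF * ?d" by (simp add: KF_def algebra_simps)
  finally show ?thesis .
qed

end


lemma Li_cont_intro [continuous_intros]:
  "a > 0 \<Longrightarrow> b > 0 \<Longrightarrow> continuous_on S g \<Longrightarrow> continuous_on S (\<lambda>x. Li a b (g x))"
  using continuous_on_compose2[OF Li_cont[of a b]] by auto

lemma quot_lip:
  fixes N N' D D' :: real
  assumes "m > 0" "D \<ge> m" "D' \<ge> m" "\<bar>N'\<bar> \<le> A" "\<bar>D'\<bar> \<le> B"
  shows "\<bar>N / D - N' / D'\<bar> \<le> (\<bar>N - N'\<bar> * B + A * \<bar>D - D'\<bar>) / m\<^sup>2"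
proof -
  have D: "D > 0" "D' > 0" using assms by auto
  have "N / D - N' / D' = (N * D' - N' * D) / (D * D')" using D by (simp add: field_simps)
  moreover have "\<bar>N * D' - N' * D\<bar> \<le> \<bar>N - N'\<bar> * B + A * \<bar>D' - D\<bar>"
    by (rule prod_bound[OF assms(5,4)]) auto
  moreover have "m\<^sup>2 \<le> D * D'" using assms by (simp add: power2_eq_square mult_mono)
  ultimately have "\<bar>N / D - N' / D'\<bar> \<le> (\<bar>N - N'\<bar> * B + A * \<bar>D' - D\<bar>) / m\<^sup>2"
    using D assms(1) by (simp add: abs_div) (smt (verit) divide_left_mono mult_pos_pos zero_less_power abs_ge_zero frac_le)
  then show ?thesis by (simp add: abs_minus_commute)
qed

context pd
begin

definition "Fc q = F (cl3 q)"

lemma Fc_lip: "norm (Fc a - Fc b) \<le> (3 * KF) * norm (a - b)"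
proof -
  obtain x y r where a: "a = (x, y, r)" by (cases a) auto
  obtain x' y' r' where b: "b = (x', y', r')" by (cases b) auto
  have "norm (Fc a - Fc b) \<le> KF * (\<bar>cl x - cl x'\<bar> + \<bar>cl y - cl y'\<bar> + \<bar>cl r - cl r'\<bar>)"
    unfolding Fc_def cl3_def a b by simp (rule F_lip, simp_all add: cl)
  also have "\<dots> \<le> KF * (\<bar>x - x'\<bar> + \<bar>y - y'\<bar> + \<bar>r - r'\<bar>)"
    using KF_pos cl(3) by (intro mult_left_mono add_mono) auto
  also have "\<dots> \<le> KF * (3 * norm (a - b))"
  proof -
    have ab: "a - b = (x - x', y - y', r - r')" by (simp add: a b)
    have "\<bar>x - x'\<bar> + \<bar>y - y'\<bar> + \<bar>r - r'\<bar> \<le> 3 * norm (a - b)"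
      unfolding ab using abs3_le1[where a="x - x'" and b="y - y'" and c="r - r'"] abs3_le2[where a="x - x'" and b="y - y'" and c="r - r'"] abs3_le3[where a="x - x'" and b="y - y'" and c="r - r'"] by linarith
    then show ?thesis using KF_pos by (intro mult_left_mono) auto
  qed
  finally show ?thesis by simp
qed

definition "p = (xs, ys, 1/2::real)"
definition "e0 = min (min xs (1-xs)) (min (min ys (1-ys)) (1/2)) / 2"

lemma e0_pos: "e0 > 0" using eq by (simp add: e0_def)
lemma e0_le: "2 * e0 \<le> xs" "2 * e0 \<le> 1 - xs" "2 * e0 \<le> ys" "2 * e0 \<le> 1 - ys" "4 * e0 \<le> 1"
proof -
  have "min (min xs (1-xs)) (min (min ys (1-ys)) (1/2)) \<le> 1/2" by linarith
  then show "4 * e0 \<le> 1" by (simp add: e0_def)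
qed (auto simp: e0_def)

lemma box:
  assumes "dist (x, y, r) p \<le> e0"
  shows "xs \<le> 2 * x" "2 * x \<le> 1 + xs" "ys \<le> 2 * y" "2 * y \<le> 1 + ys" "1 \<le> 4 * r" "4 * r \<le> 3"
    "\<bar>x - xs\<bar> \<le> e0" "\<bar>y - ys\<bar> \<le> e0" "\<bar>r - 1/2\<bar> \<le> e0"
proof -
  have d: "dist (x, y, r) p = norm (x - xs, y - ys, r - 1/2)" by (simp add: p_def dist_norm)
  show 1: "\<bar>x - xs\<bar> \<le> e0" using abs3_le1[where a="x - xs" and b="y - ys" and c="r - 1/2"] assms d by linarith
  show 2: "\<bar>y - ys\<bar> \<le> e0" using abs3_le2[where a="x - xs" and b="y - ys" and c="r - 1/2"] assms d by linarith
  show 3: "\<bar>r - 1/2\<bar> \<le> e0" using abs3_le3[where a="x - xs" and b="y - ys" and c="r - 1/2"] assms d by linarith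
  show "xs \<le> 2 * x" using 1 e0_le by linarith
  show "2 * x \<le> 1 + xs" using 1 e0_le by linarith
  show "ys \<le> 2 * y" using 2 e0_le by linarith
  show "2 * y \<le> 1 + ys" using 2 e0_le by linarith
  show "1 \<le> 4 * r" using 3 e0_le by linarith
  show "4 * r \<le> 3" using 3 e0_le by linarith
qed

lemma box':
  assumes "dist (x, y, r) p \<le> e0"
  shows "0 < x" "x < 1" "0 < y" "y < 1" "0 < r" "r < 1"
proof -
  note b = box[OF assms]
  show "0 < x" using b eq by linarith
  show "x < 1" using b eq by linarith
  show "0 < y" using b eq by linarith
  show "y < 1" using b eq by linarith
  show "0 < r" using b eq by linarith
  show "r < 1" using b eq by linarith
qed

lemma Fc_F: "dist q p \<le> e0 \<Longrightarrow> Fc q = F q"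
  using box'[of "fst q" "fst (snd q)" "snd (snd q)"] by (auto simp: Fc_def cl3_def cl(4))

abbreviation "P \<equiv> Lg dPS2 dTR2"
abbreviation "Q \<equiv> Lg dPS1 dTR1"
abbreviation "Pv \<equiv> Li dPS2 dTR2"
abbreviation "Qv \<equiv> Li dPS1 dTR1"

definition "m1 = min dPS1 dTR1"
definition "m2 = min dPS2 dTR2"
definition "kP = dPS2 + dTR2"

lemma m_pos: "m1 > 0" "m2 > 0" "kP > 0" using pos by (auto simp: m1_def m2_def kP_def)

definition "NN c s = (1 + th1) * Pv (s + c) + (1 + th2) * Qv s - 2"
definition "DD c s = phi dPS1 dTR1 (Qv s) * phi dPS2 dTR2 (Pv (s + c))"
definition "fI c s = NN c s / DD c s"
definition "Bf = A3 / (m1 * m2)"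
definition "Lf = ((1 + th1) * A1 * A2 + A3 * A1 * A2) / (kP * (m1 * m2)\<^sup>2)"

lemma Pv: "0 < Pv s" "Pv s < 1" using Li[of dPS2 dTR2 s] pos by auto
lemma Qv: "0 < Qv s" "Qv s < 1" using Li[of dPS1 dTR1 s] pos by auto

lemma phi1_b: "m1 \<le> phi dPS1 dTR1 (Qv s)" "phi dPS1 dTR1 (Qv s) \<le> A1"
  using phi_bounds[OF pos(1,2), of "Qv s"] Qv[of s] by (auto simp: m1_def A1_def)
lemma phi2_b: "m2 \<le> phi dPS2 dTR2 (Pv s)" "phi dPS2 dTR2 (Pv s) \<le> A2"
  using phi_bounds[OF pos(3,4), of "Pv s"] Pv[of s] by (auto simp: m2_def A2_def)

lemma DD_b: "m1 * m2 \<le> DD c s" "DD c s \<le> A1 * A2"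
proof -
  have a: "m1 \<le> phi dPS1 dTR1 (Qv s)" "phi dPS1 dTR1 (Qv s) \<le> A1" "m2 \<le> phi dPS2 dTR2 (Pv (s + c))" "phi dPS2 dTR2 (Pv (s + c)) \<le> A2"
    using phi1_b phi2_b by auto
  show "m1 * m2 \<le> DD c s" unfolding DD_def using a m_pos by (intro mult_mono) auto
  show "DD c s \<le> A1 * A2" unfolding DD_def using a m_pos by (intro mult_mono) auto
qed

lemma NN_b: "\<bar>NN c s\<bar> \<le> A3"
proof -
  have "(1 + th1) * Pv (s + c) \<le> 1 + th1" "(1 + th2) * Qv s \<le> 1 + th2"
       "0 \<le> (1 + th1) * Pv (s + c)" "0 \<le> (1 + th2) * Qv s"
    using Pv[of "s + c"] Qv[of s] pos by (auto simp: mult_left_le)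
  then show ?thesis using pos unfolding NN_def A3_def abs_le_iff by linarith
qed

lemma fI_b: "\<bar>fI c s\<bar> \<le> Bf"
proof -
  have "\<bar>fI c s\<bar> = \<bar>NN c s\<bar> / DD c s" using DD_b m_pos
    by (simp add: fI_def abs_div) (smt (verit) mult_pos_pos)
  also have "\<dots> \<le> A3 / (m1 * m2)"
    using NN_b DD_b m_pos pos by (intro frac_le) (auto simp: A3_def)
  finally show ?thesis by (simp add: Bf_def)
qed

lemma fI_lip: "\<bar>fI c s - fI c' s\<bar> \<le> Lf * \<bar>c - c'\<bar>"
proof -
  have Pd: "\<bar>Pv (s + c) - Pv (s + c')\<bar> \<le> \<bar>c - c'\<bar> / kP"
    using Li_lip[of dPS2 dTR2 "s + c" "s + c'"] pos by (simp add: kP_def)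
  have Nd: "\<bar>NN c s - NN c' s\<bar> \<le> (1 + th1) * (\<bar>c - c'\<bar> / kP)"
  proof -
    have "NN c s - NN c' s = (1 + th1) * (Pv (s + c) - Pv (s + c'))" by (simp add: NN_def algebra_simps)
    then show ?thesis using mult_left_mono[OF Pd, of "1 + th1"] pos by (simp add: abs_mult)
  qed
  have Dd: "\<bar>DD c s - DD c' s\<bar> \<le> A1 * (A2 * (\<bar>c - c'\<bar> / kP))"
  proof -
    have "DD c s - DD c' s = phi dPS1 dTR1 (Qv s) * (phi dPS2 dTR2 (Pv (s + c)) - phi dPS2 dTR2 (Pv (s + c')))"
      by (simp add: DD_def algebra_simps)
    moreover have "\<bar>phi dPS2 dTR2 (Pv (s + c)) - phi dPS2 dTR2 (Pv (s + c'))\<bar> \<le> A2 * (\<bar>c - c'\<bar> / kP)"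
    proof -
      have "\<bar>phi dPS2 dTR2 (Pv (s + c)) - phi dPS2 dTR2 (Pv (s + c'))\<bar> \<le> A2 * \<bar>Pv (s + c) - Pv (s + c')\<bar>"
        using phi_lip[OF pos(3,4)] by (simp add: A2_def)
      also have "\<dots> \<le> A2 * (\<bar>c - c'\<bar> / kP)" using Pd pos by (intro mult_left_mono) (auto simp: A2_def)
      finally show ?thesis .
    qed
    moreover have "\<bar>phi dPS1 dTR1 (Qv s)\<bar> \<le> A1" using phi1_b[of s] m_pos by auto
    ultimately have "\<bar>DD c s - DD c' s\<bar> \<le> A1 * (A2 * (\<bar>c - c'\<bar> / kP))"
    proof -
      assume e: "DD c s - DD c' s = phi dPS1 dTR1 (Qv s) * (phi dPS2 dTR2 (Pv (s + c)) - phi dPS2 dTR2 (Pv (s + c')))"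
        and h1: "\<bar>phi dPS2 dTR2 (Pv (s + c)) - phi dPS2 dTR2 (Pv (s + c'))\<bar> \<le> A2 * (\<bar>c - c'\<bar> / kP)"
        and h2: "\<bar>phi dPS1 dTR1 (Qv s)\<bar> \<le> A1"
      have "\<bar>phi dPS1 dTR1 (Qv s)\<bar> * \<bar>phi dPS2 dTR2 (Pv (s + c)) - phi dPS2 dTR2 (Pv (s + c'))\<bar> \<le> A1 * (A2 * (\<bar>c - c'\<bar> / kP))"
        using h1 h2 by (intro mult_mono) auto
      then show ?thesis unfolding e abs_mult .
    qed
    then show ?thesis .
  qed
  have "\<bar>fI c s - fI c' s\<bar> \<le> (\<bar>NN c s - NN c' s\<bar> * (A1 * A2) + A3 * \<bar>DD c s - DD c' s\<bar>) / (m1 * m2)\<^sup>2"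
    unfolding fI_def using DD_b[of c s] DD_b[of c' s] NN_b[of c' s] mult_pos_pos[OF m_pos(1,2)]
    by (intro quot_lip) auto
  also have "\<dots> \<le> ((1 + th1) * (\<bar>c - c'\<bar> / kP) * (A1 * A2) + A3 * (A1 * (A2 * (\<bar>c - c'\<bar> / kP)))) / (m1 * m2)\<^sup>2"
    using Nd Dd pos by (intro divide_right_mono add_mono mult_left_mono mult_right_mono) (auto simp: A1_def A2_def A3_def)
  also have "\<dots> = Lf * \<bar>c - c'\<bar>" using m_pos by (simp add: Lf_def field_simps)
  finally show ?thesis .
qed

end


lemma int_pos:
  fixes f :: "real \<Rightarrow> real"
  assumes ab: "a < b" and c: "continuous_on {a..b} f" and nn: "\<And>x. x \<in> {a..b} \<Longrightarrow> 0 \<le> f x"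
    and k: "k > 0" "\<And>x. x \<in> {(a+b)/2..b} \<Longrightarrow> k \<le> f x"
  shows "integral {a..b} f > 0"
proof -
  let ?m = "(a+b)/2"
  have i: "f integrable_on {a..b}" by (rule integrable_continuous_real[OF c])
  have i2: "f integrable_on {?m..b}" by (rule integrable_subinterval_real[OF i]) (use ab in auto)
  have i1: "f integrable_on {a..?m}" by (rule integrable_subinterval_real[OF i]) (use ab in auto)
  have "integral {a..?m} f + integral {?m..b} f = integral {a..b} f"
    by (rule Henstock_Kurzweil_Integration.integral_combine[OF _ _ i]) (use ab in auto)
  moreover have "0 \<le> integral {a..?m} f" using nn ab by (intro integral_nonneg[OF i1]) auto
  moreover have "integral {?m..b} (\<lambda>x. k) \<le> integral {?m..b} f"
    by (rule integral_le[OF _ i2]) (use k in auto)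
  moreover have "integral {?m..b} (\<lambda>x. k) = (b - ?m) * k" using ab by simp
  moreover have "(b - ?m) * k > 0" using ab k by simp
  ultimately show ?thesis by linarith
qed

lemma int_neg:
  fixes f :: "real \<Rightarrow> real"
  assumes ab: "a < b" and c: "continuous_on {a..b} f" and nn: "\<And>x. x \<in> {a..b} \<Longrightarrow> f x \<le> 0"
    and k: "k > 0" "\<And>x. x \<in> {a..(a+b)/2} \<Longrightarrow> f x \<le> -k"
  shows "integral {a..b} f < 0"
proof -
  have "integral {-b..-a} (\<lambda>x. - f (- x)) > 0"
  proof (rule int_pos)
    show "-b < -a" using ab by simp
    show "continuous_on {-b..-a} (\<lambda>x. - f (- x))"
      by (intro continuous_intros continuous_on_compose2[OF c]) auto
    show "\<And>x. x \<in> {-b..-a} \<Longrightarrow> 0 \<le> - f (- x)" using nn by force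
    show "k > 0" by fact
    fix x assume "x \<in> {(-b + -a)/2..-a}"
    then have "-x \<in> {a..(a+b)/2}" by auto
    then show "k \<le> - f (- x)" using k by force
  qed
  then show ?thesis by simp
qed

context pd
begin

definition "b0 = Q (ys/2) - 1"

lemma NN_cont: "continuous_on A (NN c)"
  unfolding NN_def[abs_def] using pos by (intro continuous_intros) auto
lemma DD_cont: "continuous_on A (DD c)"
  unfolding DD_def[abs_def] phi_def using pos by (intro continuous_intros) auto
lemma DD_pos: "DD c s > 0" using DD_b(1)[of c s] mult_pos_pos[OF m_pos(1,2)] by linarith

lemma fI_cont: "continuous_on A (fI c)"
proof -
  have "continuous_on A (\<lambda>s. NN c s / DD c s)"
  proof (intro continuous_on_divide NN_cont DD_cont ballI)
    fix s show "DD c s \<noteq> 0" using DD_pos[of c s] by linarith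
  qed
  then show ?thesis by (simp add: fI_def[abs_def])
qed

lemma fI_int: "fI c integrable_on {a..b}"
  by (rule integrable_continuous_real[OF fI_cont])

definition "Gi c s = integral {b0..s} (fI c)"

lemma Gi_deriv:
  assumes "b0 < s"
  shows "(Gi c has_real_derivative fI c s) (at s)"
proof -
  have "((\<lambda>x. integral {b0..x} (fI c)) has_real_derivative fI c s) (at s within {b0..s+1})"
    by (rule integral_has_real_derivative[OF fI_cont]) (use assms in auto)
  moreover have "at s within {b0..s+1} = at s"
    by (rule at_within_interior) (use assms in auto)
  ultimately show ?thesis by (simp add: Gi_def[abs_def])
qed

lemma Bf_nn: "Bf \<ge> 0" using fI_b[of 0 0] by linarith
lemma Lf_nn: "Lf \<ge> 0" using m_pos pos by (simp add: Lf_def A1_def A2_def A3_def)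

lemma Gi_step:
  assumes "b0 \<le> s" "s \<le> s'"
  shows "\<bar>Gi c s' - Gi c s\<bar> \<le> Bf * (s' - s)"
proof -
  have "integral {b0..s} (fI c) + integral {s..s'} (fI c) = integral {b0..s'} (fI c)"
    by (rule Henstock_Kurzweil_Integration.integral_combine[OF assms fI_int])
  then have "Gi c s' - Gi c s = integral {s..s'} (fI c)" by (simp add: Gi_def)
  moreover have "norm (integral {s..s'} (fI c)) \<le> Bf * Henstock_Kurzweil_Integration.content {s..s'}"
    by (rule has_integral_bound_real[where S="{}"]) (use Bf_nn fI_b fI_int in auto)
  ultimately show ?thesis using assms by simp
qed

lemma Gi_bound:
  assumes "b0 \<le> s" "b0 \<le> s'"
  shows "\<bar>Gi c s - Gi c' s'\<bar> \<le> Lf * \<bar>c - c'\<bar> * (s - b0) + Bf * \<bar>s - s'\<bar>"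
proof -
  have "Gi c s - Gi c' s = integral {b0..s} (\<lambda>x. fI c x - fI c' x)"
    by (simp add: Gi_def integral_diff fI_int)
  moreover have "norm (integral {b0..s} (\<lambda>x. fI c x - fI c' x)) \<le> (Lf * \<bar>c - c'\<bar>) * Henstock_Kurzweil_Integration.content {b0..s}"
    by (rule has_integral_bound_real[where S="{}"])
       (use Lf_nn fI_lip in \<open>auto intro!: integrable_integral integrable_diff fI_int\<close>)
  ultimately have 1: "\<bar>Gi c s - Gi c' s\<bar> \<le> Lf * \<bar>c - c'\<bar> * (s - b0)" using assms by simp
  have 2: "\<bar>Gi c' s - Gi c' s'\<bar> \<le> Bf * \<bar>s - s'\<bar>"
  proof (cases "s \<le> s'")
    case True then show ?thesis using Gi_step[OF assms(1) True, of c'] by (simp add: abs_minus_commute)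
  next
    case False then show ?thesis using Gi_step[OF assms(2), of s c'] by simp
  qed
  show ?thesis using 1 2 by linarith
qed

lemma Gi_max: "Gi c s = Gi c (max b0 s)"
proof (cases "s < b0")
  case True then show ?thesis by (simp add: Gi_def)
next
  case False then show ?thesis by (simp add: Gi_def)
qed

lemma Gi_cont: "continuous_on UNIV (\<lambda>z. Gi (fst z) (snd z))"
  unfolding continuous_on_iff
proof (intro ballI allI impI)
  fix z0 :: "real \<times> real" and e :: real assume e: "e > 0"
  obtain c1 s1 where z0: "z0 = (c1, s1)" by (cases z0) auto
  define R where "R = Lf * (\<bar>s1 - b0\<bar> + 1) + Bf + 1"
  have R: "R > 0" using Lf_nn Bf_nn by (simp add: R_def add_nonneg_pos)
  define d where "d = min 1 (e / R)"
  have d: "d > 0" "d \<le> 1" "d \<le> e / R" using e R by (auto simp: d_def)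
  show "\<exists>d>0. \<forall>z\<in>UNIV. dist z z0 < d \<longrightarrow> dist (Gi (fst z) (snd z)) (Gi (fst z0) (snd z0)) < e"
  proof (intro exI[of _ d] conjI ballI impI)
    show "d > 0" by fact
    fix z :: "real \<times> real" assume zd: "dist z z0 < d"
    obtain c s where z: "z = (c, s)" by (cases z) auto
    have cd: "\<bar>c - c1\<bar> < d" using dist_fst_le[of z z0] zd by (simp add: z z0 dist_real_def)
    have sd: "\<bar>s - s1\<bar> < d" using dist_snd_le[of z z0] zd by (simp add: z z0 dist_real_def)
    have "\<bar>Gi c s - Gi c1 s1\<bar> = \<bar>Gi c (max b0 s) - Gi c1 (max b0 s1)\<bar>" using Gi_max by metis
    also have "\<dots> \<le> Lf * \<bar>c - c1\<bar> * (max b0 s - b0) + Bf * \<bar>max b0 s - max b0 s1\<bar>"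
      by (rule Gi_bound) auto
    also have "\<dots> \<le> Lf * d * (\<bar>s1 - b0\<bar> + 1) + Bf * d"
    proof -
      have h1: "Lf * \<bar>c - c1\<bar> \<le> Lf * d" using cd Lf_nn by (intro mult_left_mono) auto
      have h2: "max b0 s - b0 \<le> \<bar>s1 - b0\<bar> + 1" using sd d by linarith
      have h3: "\<bar>max b0 s - max b0 s1\<bar> \<le> d" using sd by linarith
      have "Lf * \<bar>c - c1\<bar> * (max b0 s - b0) \<le> Lf * d * (\<bar>s1 - b0\<bar> + 1)"
        by (rule mult_mono[OF h1 h2]) (use Lf_nn d in auto)
      moreover have "Bf * \<bar>max b0 s - max b0 s1\<bar> \<le> Bf * d" using h3 Bf_nn by (intro mult_left_mono)
      ultimately show ?thesis by linarith
    qed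
    also have "\<dots> < R * d" using d Lf_nn by (simp add: R_def algebra_simps)
    also have "R * d \<le> e" using d R by (simp add: field_simps)
    finally show "dist (Gi (fst z) (snd z)) (Gi (fst z0) (snd z0)) < e" by (simp add: z z0 dist_real_def)
  qed
qed

end


lemma comp_deriv:
  fixes u :: "real \<Rightarrow> real \<times> real \<times> real"
  assumes "(u has_vector_derivative v) (at t within S)"
  shows "((\<lambda>t. fst (u t)) has_real_derivative fst v) (at t within S)"
    "((\<lambda>t. fst (snd (u t))) has_real_derivative fst (snd v)) (at t within S)"
    "((\<lambda>t. snd (snd (u t))) has_real_derivative snd (snd v)) (at t within S)"
proof -
  have d: "(u has_derivative (\<lambda>h. h *\<^sub>R v)) (at t within S)"
    using assms by (simp add: has_vector_derivative_def)
  have "((\<lambda>t. fst (u t)) has_derivative (\<lambda>h. fst (h *\<^sub>R v))) (at t within S)"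
    by (rule has_derivative_fst[OF d])
  moreover have "(\<lambda>h. fst (h *\<^sub>R v)) = (*) (fst v)" by (auto simp: mult.commute)
  ultimately show "((\<lambda>t. fst (u t)) has_real_derivative fst v) (at t within S)"
    by (simp add: has_field_derivative_def)
  have "((\<lambda>t. fst (snd (u t))) has_derivative (\<lambda>h. fst (snd (h *\<^sub>R v)))) (at t within S)"
    by (rule has_derivative_fst[OF has_derivative_snd[OF d]])
  moreover have "(\<lambda>h. fst (snd (h *\<^sub>R v))) = (*) (fst (snd v))" by (auto simp: mult.commute)
  ultimately show "((\<lambda>t. fst (snd (u t))) has_real_derivative fst (snd v)) (at t within S)"
    by (simp add: has_field_derivative_def)
  have "((\<lambda>t. snd (snd (u t))) has_derivative (\<lambda>h. snd (snd (h *\<^sub>R v)))) (at t within S)"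
    by (rule has_derivative_snd[OF has_derivative_snd[OF d]])
  moreover have "(\<lambda>h. snd (snd (h *\<^sub>R v))) = (*) (snd (snd v))" by (auto simp: mult.commute)
  ultimately show "((\<lambda>t. snd (snd (u t))) has_real_derivative snd (snd v)) (at t within S)"
    by (simp add: has_field_derivative_def)
qed

context pd
begin

definition "H q = P (fst q) - Q (fst (snd q))"
definition "V q = Gi (H q) (Q (fst (snd q))) - ln (snd (snd q) * (1 - snd (snd q)))"
definition "c0 = H p"
definition "V0 = V p"
definition "Th q = \<bar>H q - c0\<bar> + \<bar>V q - V0\<bar>"

lemma inb:
  assumes "q \<in> cball p e0"
  shows "0 < fst q" "fst q < 1" "0 < fst (snd q)" "fst (snd q) < 1" "0 < snd (snd q)" "snd (snd q) < 1"
    "ys \<le> 2 * fst (snd q)"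
proof -
  have d: "dist (fst q, fst (snd q), snd (snd q)) p \<le> e0" using assms by (simp add: dist_commute)
  show "0 < fst q" "fst q < 1" "0 < fst (snd q)" "fst (snd q) < 1" "0 < snd (snd q)" "snd (snd q) < 1"
    using box'[OF d] by auto
  show "ys \<le> 2 * fst (snd q)" using box[OF d] by auto
qed

lemma Q_b0: assumes "0 < y" "y < 1" "ys \<le> 2 * y" shows "b0 < Q y"
proof -
  have "Q (ys/2) \<le> Q y"
  proof (cases "ys/2 = y")
    case False
    then show ?thesis using Lg_strict[OF pos(1,2), of "ys/2" y] assms eq by auto
  qed simp
  then show ?thesis by (simp add: b0_def)
qed

lemma p_in: "p \<in> cball p e0" using e0_pos by simp

lemma Th_cont: "continuous_on (cball p e0) Th"
proof -
  have inb': "\<forall>q\<in>cball p e0. 0 < fst q \<and> fst q < 1 \<and> 0 < fst (snd q) \<and> fst (snd q) < 1 \<and> 0 < snd (snd q) \<and> snd (snd q) < 1"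
    using inb by blast
  have Hc: "continuous_on (cball p e0) H"
    unfolding H_def[abs_def] Lg_def using inb' by (intro continuous_intros) auto
  have Qc: "continuous_on (cball p e0) (\<lambda>q. Q (fst (snd q)))"
    unfolding Lg_def using inb' by (intro continuous_intros) auto
  have "continuous_on (cball p e0) (\<lambda>q. Gi (fst (H q, Q (fst (snd q)))) (snd (H q, Q (fst (snd q)))))"
    by (rule continuous_on_compose2[OF Gi_cont]) (use Hc Qc in \<open>auto intro!: continuous_intros\<close>)
  then have Gc: "continuous_on (cball p e0) (\<lambda>q. Gi (H q) (Q (fst (snd q))))" by simp
  have "continuous_on (cball p e0) V"
    unfolding V_def[abs_def] using Gc inb'
    by (intro continuous_intros) (auto simp: mult_pos_pos)
  then show ?thesis unfolding Th_def[abs_def] using Hc by (intro continuous_intros)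
qed

lemma Th_nn: "Th q \<ge> 0" by (simp add: Th_def)
lemma Th_p: "Th p = 0" by (simp add: Th_def c0_def V0_def)

lemma c0_eq: "c0 = P xs - Q ys" by (simp add: c0_def H_def p_def)

lemma NN_mono: "s \<le> s' \<Longrightarrow> NN c s \<le> NN c s'"
proof -
  assume "s \<le> s'"
  then have "Pv (s + c) \<le> Pv (s' + c)" "Qv s \<le> Qv s'"
    using Li_strict[OF pos(3,4), of "s + c" "s' + c"] Li_strict[OF pos(1,2), of s s']
    by (cases "s = s'"; auto)+
  then show "NN c s \<le> NN c s'" unfolding NN_def using pos
    by (smt (verit) mult_left_mono)
qed

lemma NN_c0: "NN c0 (Q ys) = 0"
  using Li_Lg[OF pos(3,4) eq(1,2)] Li_Lg[OF pos(1,2) eq(3,4)] eqL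
  by (simp add: NN_def c0_eq)

lemma NN_c0_pos: "s > Q ys \<Longrightarrow> NN c0 s > 0"
proof -
  assume s: "s > Q ys"
  have "Pv (Q ys + c0) < Pv (s + c0)" "Qv (Q ys) < Qv s"
    using Li_strict[OF pos(3,4)] Li_strict[OF pos(1,2)] s by auto
  then have "Pv (Q ys + c0) < Pv (s + c0) \<and> Qv (Q ys) < Qv s" by simp
  then have "NN c0 (Q ys) < NN c0 s" unfolding NN_def using pos
    by (smt (verit) mult_strict_left_mono)
  then show ?thesis using NN_c0 by simp
qed

lemma NN_c0_neg: "s < Q ys \<Longrightarrow> NN c0 s < 0"
proof -
  assume s: "s < Q ys"
  have "Pv (s + c0) < Pv (Q ys + c0)" "Qv s < Qv (Q ys)"
    using Li_strict[OF pos(3,4)] Li_strict[OF pos(1,2)] s by auto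
  then have "NN c0 s < NN c0 (Q ys)" unfolding NN_def using pos
    by (smt (verit) mult_strict_left_mono)
  then show ?thesis using NN_c0 by simp
qed

lemma A12_pos: "A1 * A2 > 0" using pos by (simp add: A1_def A2_def)

lemma fI_ge: "NN c s \<ge> 0 \<Longrightarrow> fI c s \<ge> NN c s / (A1 * A2)"
  unfolding fI_def using DD_pos[of c s] DD_b(2)[of c s]
  by (intro divide_left_mono) (auto intro: mult_pos_pos)

lemma fI_le: "NN c s \<le> 0 \<Longrightarrow> fI c s \<le> NN c s / (A1 * A2)"
proof -
  assume "NN c s \<le> 0"
  then have "- NN c s / (A1 * A2) \<le> - NN c s / DD c s"
    using DD_pos[of c s] DD_b(2)[of c s] by (intro divide_left_mono) (auto intro: mult_pos_pos)
  then show ?thesis by (simp add: fI_def)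
qed

lemma Gi_c0_gt:
  assumes "b0 \<le> s" "s \<noteq> Q ys" "b0 \<le> Q ys"
  shows "Gi c0 s > Gi c0 (Q ys)"
proof (cases "s > Q ys")
  case True
  let ?m = "(Q ys + s) / 2"
  have "integral {Q ys..s} (fI c0) > 0"
  proof (rule int_pos[OF True fI_cont])
    fix x assume "x \<in> {Q ys..s}"
    then have "NN c0 x \<ge> 0" using NN_c0 NN_mono[of "Q ys" x c0] by auto
    then show "0 \<le> fI c0 x" using fI_ge[of c0 x] A12_pos by (smt (verit) divide_nonneg_pos)
  next
    show "NN c0 ?m / (A1 * A2) > 0" using NN_c0_pos[of ?m] True A12_pos by simp
    fix x assume "x \<in> {?m..s}"
    then have "NN c0 x \<ge> NN c0 ?m" using NN_mono by auto
    moreover have "NN c0 ?m > 0" using NN_c0_pos[of ?m] True by simp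
    ultimately show "NN c0 ?m / (A1 * A2) \<le> fI c0 x"
      using fI_ge[of c0 x] A12_pos by (smt (verit) divide_right_mono)
  qed
  moreover have "integral {b0..Q ys} (fI c0) + integral {Q ys..s} (fI c0) = integral {b0..s} (fI c0)"
    by (rule Henstock_Kurzweil_Integration.integral_combine[OF _ _ fI_int]) (use assms True in auto)
  ultimately show ?thesis by (simp add: Gi_def)
next
  case False
  then have F: "s < Q ys" using assms by auto
  let ?m = "(s + Q ys) / 2"
  have "integral {s..Q ys} (fI c0) < 0"
  proof (rule int_neg[OF F fI_cont])
    fix x assume "x \<in> {s..Q ys}"
    then have "NN c0 x \<le> 0" using NN_c0 NN_mono[of x "Q ys" c0] by auto
    then show "fI c0 x \<le> 0" using fI_le[of c0 x] A12_pos by (smt (verit) divide_nonpos_pos)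
  next
    show "- NN c0 ?m / (A1 * A2) > 0" using NN_c0_neg[of ?m] F A12_pos by (simp add: divide_less_0_iff)
    fix x assume "x \<in> {s..?m}"
    then have "NN c0 x \<le> NN c0 ?m" using NN_mono by auto
    moreover have "NN c0 ?m < 0" using NN_c0_neg[of ?m] F by simp
    ultimately have "fI c0 x \<le> NN c0 x / (A1 * A2)" "NN c0 x / (A1 * A2) \<le> NN c0 ?m / (A1 * A2)"
      using fI_le[of c0 x] A12_pos by (auto intro: divide_right_mono)
    then show "fI c0 x \<le> - (- NN c0 ?m / (A1 * A2))" by simp
  qed
  moreover have "integral {b0..s} (fI c0) + integral {s..Q ys} (fI c0) = integral {b0..Q ys} (fI c0)"
    by (rule Henstock_Kurzweil_Integration.integral_combine[OF _ _ fI_int]) (use assms F in auto)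
  ultimately show ?thesis by (simp add: Gi_def)
qed

lemma ln_r: fixes r :: real assumes "0 < r" "r < 1" shows "- ln (r * (1 - r)) \<ge> - ln (1/4)"
  and "- ln (r * (1 - r)) = - ln (1/4) \<Longrightarrow> r = 1/2"
proof -
  have le: "r * (1 - r) \<le> 1/4"
  proof -
    have "0 \<le> (r - 1/2)^2" by simp
    then show ?thesis by (simp add: power2_eq_square algebra_simps)
  qed
  have pr: "0 < r * (1 - r)" using assms by simp
  show "- ln (r * (1 - r)) \<ge> - ln (1/4)" using le pr by simp
  assume "- ln (r * (1 - r)) = - ln (1/4)"
  then have "r * (1 - r) = 1/4" using pr by simp
  then have "(r - 1/2)^2 = 0" by (simp add: power2_eq_square algebra_simps)
  then show "r = 1/2" by simp
qed

lemma Th_zero: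
  assumes q: "q \<in> cball p e0" and z: "Th q = 0"
  shows "q = p"
proof -
  obtain x y r where qe: "q = (x, y, r)" by (cases q) auto
  note b = inb[OF q, unfolded qe, simplified]
  have Hq: "H q = c0" and Vq: "V q = V0" using z Th_nn by (auto simp: Th_def)
  have Vq': "Gi c0 (Q y) - ln (r * (1 - r)) = Gi c0 (Q ys) - ln (1/4)"
    using Vq Hq by (simp add: V_def V0_def qe p_def c0_def)
  have bQ: "b0 < Q y" by (rule Q_b0) (use b in auto)
  have bQs: "b0 < Q ys" by (rule Q_b0) (use eq in auto)
  have yy: "Q y = Q ys"
  proof (rule ccontr)
    assume "Q y \<noteq> Q ys"
    then have "Gi c0 (Q y) > Gi c0 (Q ys)" using Gi_c0_gt bQ bQs by auto
    then show False using Vq' ln_r(1)[of r] b by linarith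
  qed
  have rr: "r = 1/2" using Vq' yy ln_r(2)[of r] b by simp
  have y: "y = ys" using yy Lg_inj[OF pos(1,2)] b eq by blast
  have "P x = P xs" using Hq y by (simp add: H_def qe c0_eq)
  then have x: "x = xs" using Lg_inj[OF pos(3,4)] b eq by blast
  show ?thesis using x y rr by (simp add: qe p_def)
qed

end


context pd
begin

lemma phi_pos1: "0 < y \<Longrightarrow> y < 1 \<Longrightarrow> phi dPS1 dTR1 y > 0"
  using phi_bounds(1)[OF pos(1,2), of y] pos by linarith
lemma phi_pos2: "0 < y \<Longrightarrow> y < 1 \<Longrightarrow> phi dPS2 dTR2 y > 0"
  using phi_bounds(1)[OF pos(3,4), of y] pos by linarith

lemma conserve:
  assumes t1: "0 \<le> t1"
    and d: "\<And>t. t \<in> {0..t1} \<Longrightarrow> (u has_vector_derivative F (u t)) (at t within {0..t1})"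
    and inball: "\<And>t. t \<in> {0..t1} \<Longrightarrow> u t \<in> cball p e0"
    and tt: "t \<in> {0..t1}"
  shows "Th (u t) = Th (u 0)"
proof -
  define x where "x = (\<lambda>t. fst (u t))"
  define y where "y = (\<lambda>t. fst (snd (u t)))"
  define r where "r = (\<lambda>t. snd (snd (u t)))"
  define L where "L = (\<lambda>t. (1 + th1) * x t + (1 + th2) * y t - 2)"
  have ut: "u t = (x t, y t, r t)" for t by (simp add: x_def y_def r_def)
  have Fu: "F (u t) = (x t * (1 - x t) * phi dPS1 dTR1 (y t) * (1 - 2 * r t),
      y t * (1 - y t) * phi dPS2 dTR2 (x t) * (1 - 2 * r t), r t * (1 - r t) * L t)" for t
    by (simp add: ut F_eval L_def)
  have bx: "0 < x t" "x t < 1" "0 < y t" "y t < 1" "0 < r t" "r t < 1" "ys \<le> 2 * y t"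
    if "t \<in> {0..t1}" for t
    using inb[OF inball[OF that]] by (simp_all add: x_def y_def r_def)
  have dx: "(x has_real_derivative (x t * (1 - x t) * phi dPS1 dTR1 (y t) * (1 - 2 * r t))) (at t within {0..t1})"
    if "t \<in> {0..t1}" for t
    using comp_deriv(1)[OF d[OF that]] unfolding Fu by (simp add: x_def[symmetric])
  have dy: "(y has_real_derivative (y t * (1 - y t) * phi dPS2 dTR2 (x t) * (1 - 2 * r t))) (at t within {0..t1})"
    if "t \<in> {0..t1}" for t
    using comp_deriv(2)[OF d[OF that]] unfolding Fu by (simp add: y_def[symmetric])
  have dr: "(r has_real_derivative (r t * (1 - r t) * L t)) (at t within {0..t1})"
    if "t \<in> {0..t1}" for t
    using comp_deriv(3)[OF d[OF that]] unfolding Fu by (simp add: r_def[symmetric])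
  have Hu: "H (u t) = P (x t) - Q (y t)" for t by (simp add: H_def x_def y_def)
  have dh: "((\<lambda>t. H (u t)) has_real_derivative 0) (at t within {0..t1})" if tt: "t \<in> {0..t1}" for t
  proof -
    note b = bx[OF tt]
    have "((\<lambda>t. P (x t) - Q (y t)) has_real_derivative
        (phi dPS2 dTR2 (x t) / (x t * (1 - x t))) * (x t * (1 - x t) * phi dPS1 dTR1 (y t) * (1 - 2 * r t))
      - (phi dPS1 dTR1 (y t) / (y t * (1 - y t))) * (y t * (1 - y t) * phi dPS2 dTR2 (x t) * (1 - 2 * r t))) (at t within {0..t1})"
      by (intro DERIV_diff DERIV_chain2[OF Lg_deriv[OF pos(3,4)] dx[OF tt]] DERIV_chain2[OF Lg_deriv[OF pos(1,2)] dy[OF tt]]) (use b in auto)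
    moreover have "(phi dPS2 dTR2 (x t) / (x t * (1 - x t))) * (x t * (1 - x t) * phi dPS1 dTR1 (y t) * (1 - 2 * r t))
      - (phi dPS1 dTR1 (y t) / (y t * (1 - y t))) * (y t * (1 - y t) * phi dPS2 dTR2 (x t) * (1 - 2 * r t)) = 0"
      using b by (simp add: field_simps)
    ultimately show ?thesis by (simp add: Hu)
  qed
  obtain C where C: "\<forall>t\<in>{0..t1}. H (u t) = C"
    using has_field_derivative_zero_constant[of "{0..t1}" "\<lambda>t. H (u t)"] dh by auto
  define c' where "c' = H (u 0)"
  have Hc: "H (u t) = c'" if "t \<in> {0..t1}" for t using C that t1 by (simp add: c'_def)
  define w where "w = (\<lambda>t. Gi c' (Q (y t)) - ln (r t * (1 - r t)))"
  have dw: "(w has_real_derivative 0) (at t within {0..t1})" if tt: "t \<in> {0..t1}" for t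
  proof -
    note b = bx[OF tt]
    have bq: "b0 < Q (y t)" by (rule Q_b0) (use b in auto)
    have dQ: "((\<lambda>t. Q (y t)) has_real_derivative
        (phi dPS1 dTR1 (y t) / (y t * (1 - y t))) * (y t * (1 - y t) * phi dPS2 dTR2 (x t) * (1 - 2 * r t))) (at t within {0..t1})"
      by (intro DERIV_chain2[OF Lg_deriv[OF pos(1,2)] dy[OF tt]]) (use b in auto)
    have dG: "((\<lambda>t. Gi c' (Q (y t))) has_real_derivative fI c' (Q (y t)) *
        ((phi dPS1 dTR1 (y t) / (y t * (1 - y t))) * (y t * (1 - y t) * phi dPS2 dTR2 (x t) * (1 - 2 * r t)))) (at t within {0..t1})"
      by (rule DERIV_chain2[OF Gi_deriv[OF bq] dQ])
    have drr: "((\<lambda>t. r t * (1 - r t)) has_real_derivative r t * (- (r t * (1 - r t) * L t)) + (r t * (1 - r t) * L t) * (1 - r t)) (at t within {0..t1})"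
      by (intro DERIV_mult' dr[OF tt] DERIV_diff[of "\<lambda>_. 1" 0, simplified])
    have dl: "((\<lambda>t. ln (r t * (1 - r t))) has_real_derivative inverse (r t * (1 - r t)) * (r t * (- (r t * (1 - r t) * L t)) + (r t * (1 - r t) * L t) * (1 - r t))) (at t within {0..t1})"
      by (rule DERIV_chain2[OF DERIV_ln drr]) (use b in simp)
    have Pv: "Pv (Q (y t) + c') = x t"
    proof -
      have "Q (y t) + c' = P (x t)" using Hc[OF tt] Hu[of t] by simp
      then show ?thesis using Li_Lg[OF pos(3,4)] b by simp
    qed
    have Qv: "Qv (Q (y t)) = y t" using Li_Lg[OF pos(1,2)] b by simp
    have fe: "fI c' (Q (y t)) = L t / (phi dPS1 dTR1 (y t) * phi dPS2 dTR2 (x t))"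
      by (simp add: fI_def NN_def DD_def Pv Qv L_def)
    have "(w has_real_derivative fI c' (Q (y t)) *
        ((phi dPS1 dTR1 (y t) / (y t * (1 - y t))) * (y t * (1 - y t) * phi dPS2 dTR2 (x t) * (1 - 2 * r t)))
        - inverse (r t * (1 - r t)) * (r t * (- (r t * (1 - r t) * L t)) + (r t * (1 - r t) * L t) * (1 - r t))) (at t within {0..t1})"
      unfolding w_def by (rule DERIV_diff[OF dG dl])
    moreover have "fI c' (Q (y t)) *
        ((phi dPS1 dTR1 (y t) / (y t * (1 - y t))) * (y t * (1 - y t) * phi dPS2 dTR2 (x t) * (1 - 2 * r t)))
        - inverse (r t * (1 - r t)) * (r t * (- (r t * (1 - r t) * L t)) + (r t * (1 - r t) * L t) * (1 - r t)) = 0"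
      unfolding fe using b phi_pos1[of "y t"] phi_pos2[of "x t"] by (simp add: field_simps)
    ultimately show ?thesis by simp
  qed
  obtain C2 where C2: "\<forall>t\<in>{0..t1}. w t = C2"
    using has_field_derivative_zero_constant[of "{0..t1}" w] dw by auto
  have Vw: "V (u t) = w t" if "t \<in> {0..t1}" for t
    using Hc[OF that] by (simp add: V_def w_def y_def r_def)
  have z: "0 \<in> {0..t1}" using t1 by simp
  show ?thesis unfolding Th_def using Hc[OF tt] Hc[OF z] Vw[OF tt] Vw[OF z] C2 tt z by simp
qed

end


context pd
begin

lemma confine:
  assumes e1: "0 < e1" "e1 \<le> e0" and m: "\<forall>q\<in>sphere p e1. m \<le> Th q"
    and x0: "dist x0 p < e1" "Th x0 < m"
    and u0: "u 0 = x0"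
    and du: "\<forall>t\<ge>0. (u has_vector_derivative Fm (u t)) (at t within {0..})"
    and Fm: "\<forall>q\<in>cball p e0. Fm q = F q"
  shows "\<forall>t\<ge>0. dist (u t) p < e1"
proof (rule ccontr)
  assume "\<not> (\<forall>t\<ge>0. dist (u t) p < e1)"
  then obtain T where T: "T \<ge> 0" "e1 \<le> dist (u T) p" by (auto simp: not_less)
  define g where "g = (\<lambda>t. dist (u t) p)"
  have uc: "continuous_on {0..} u"
    using du by (intro continuous_on_vector_derivative) auto
  have gc: "continuous_on {0..} g" unfolding g_def by (intro continuous_intros uc)
  define S where "S = {0..} \<inter> g -` {e1..}"
  have Sc: "closed S" unfolding S_def by (rule continuous_closed_preimage[OF gc]) auto
  have TS: "T \<in> S" using T by (simp add: S_def g_def)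
  have bS: "bdd_below S" by (rule bdd_belowI[of _ 0]) (auto simp: S_def)
  define t1 where "t1 = Inf S"
  have t1S: "t1 \<in> S" unfolding t1_def by (rule closed_contains_Inf) (use TS bS Sc in auto)
  then have t1: "t1 \<ge> 0" "e1 \<le> g t1" by (auto simp: S_def)
  have before: "g s < e1" if "0 \<le> s" "s < t1" for s
  proof (rule ccontr)
    assume "\<not> g s < e1"
    then have "s \<in> S" using that by (auto simp: S_def)
    then have "t1 \<le> s" unfolding t1_def using bS by (rule cInf_lower)
    then show False using that by simp
  qed
  have g0: "g 0 < e1" using x0 u0 by (simp add: g_def)
  obtain t2 where t2: "0 \<le> t2" "t2 \<le> t1" "g t2 = e1"
    using IVT'[of g 0 e1 t1] g0 t1 continuous_on_subset[OF gc, of "{0..t1}"] by auto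
  have "t2 \<in> S" using t2 by (simp add: S_def)
  then have "t1 \<le> t2" unfolding t1_def using bS by (rule cInf_lower)
  then have gt1: "g t1 = e1" using t2 by simp
  have inball: "u s \<in> cball p e0" if "s \<in> {0..t1}" for s
  proof -
    have "g s \<le> e1" using that before[of s] gt1 by (cases "s < t1") auto
    then show ?thesis using e1 by (simp add: g_def dist_commute)
  qed
  have d: "(u has_vector_derivative F (u s)) (at s within {0..t1})" if "s \<in> {0..t1}" for s
  proof -
    have "(u has_vector_derivative Fm (u s)) (at s within {0..})" using du that by auto
    then have "(u has_vector_derivative Fm (u s)) (at s within {0..t1})"
      by (rule has_vector_derivative_within_subset) auto
    then show ?thesis using Fm inball[OF that] by simp
  qed
  have "Th (u t1) = Th (u 0)" by (rule conserve[OF t1(1) d inball]) (use t1 in auto)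
  then have "Th (u t1) < m" using x0 u0 by simp
  moreover have "u t1 \<in> sphere p e1" using gt1 by (simp add: g_def dist_commute)
  ultimately show False using m by force
qed

lemma lyap: "lyapunov_stable F p"
  unfolding lyapunov_stable_def
proof (intro allI impI)
  fix \<epsilon> :: real assume \<epsilon>: "\<epsilon> > 0"
  define e1 where "e1 = min \<epsilon> e0"
  have e1: "0 < e1" "e1 \<le> e0" "e1 \<le> \<epsilon>" using \<epsilon> e0_pos by (auto simp: e1_def)
  have sub: "sphere p e1 \<subseteq> cball p e0" using e1 by auto
  have ne: "sphere p e1 \<noteq> {}"
  proof -
    have "(xs + e1, ys, 1/2) \<in> sphere p e1" using e1 by (simp add: p_def dist_Pair_Pair dist_real_def)
    then show ?thesis by blast
  qed
  obtain qs where qs: "qs \<in> sphere p e1" "\<forall>q\<in>sphere p e1. Th qs \<le> Th q"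
    using continuous_attains_inf[OF compact_sphere ne continuous_on_subset[OF Th_cont sub]] by blast
  define m where "m = Th qs"
  have mpos: "m > 0"
  proof -
    have "qs \<noteq> p" using qs(1) e1 by auto
    then have "Th qs \<noteq> 0" using Th_zero qs(1) sub by blast
    then show ?thesis using Th_nn[of qs] by (simp add: m_def)
  qed
  have mle: "\<forall>q\<in>sphere p e1. m \<le> Th q" using qs by (simp add: m_def)
  obtain d where d: "d > 0" "\<forall>q\<in>cball p e0. dist q p < d \<longrightarrow> dist (Th q) (Th p) < m"
    using Th_cont p_in mpos unfolding continuous_on_iff by blast
  show "\<exists>\<delta>>0. \<forall>x0. dist x0 p < \<delta> \<longrightarrow> (\<exists>u. is_solution F u x0) \<and> (\<forall>u. is_solution F u x0 \<longrightarrow> (\<forall>t\<ge>0. dist (u t) p < \<epsilon>))"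
  proof (intro exI[of _ "min d e1"] conjI allI impI)
    show "min d e1 > 0" using d e1 by simp
    fix x0 assume x0: "dist x0 p < min d e1"
    have x0c: "x0 \<in> cball p e0" using x0 e1 by (simp add: dist_commute)
    have Thx0: "Th x0 < m" using d(2) x0c x0 Th_p Th_nn[of x0] by (auto simp: dist_real_def)
    have x0e: "dist x0 p < e1" using x0 by simp
    obtain u where u: "u 0 = x0" "\<forall>t\<ge>0. (u has_vector_derivative Fc (u t)) (at t within {0..})"
      using picard_exists[of "3 * KF" Fc x0] KF_pos Fc_lip by auto
    have FcF: "\<forall>q\<in>cball p e0. Fc q = F q" using Fc_F by (simp add: dist_commute)
    have ub: "\<forall>t\<ge>0. dist (u t) p < e1" by (rule confine[OF e1(1,2) mle x0e Thx0 u(1) u(2) FcF])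
    have "is_solution F u x0"
      unfolding is_solution_def
    proof (intro conjI allI impI)
      show "u 0 = x0" by (rule u(1))
      fix t :: real assume t: "t \<ge> 0"
      have "dist (u t) p \<le> e0" using ub t e1 by force
      then have "Fc (u t) = F (u t)" by (rule Fc_F)
      then show "(u has_vector_derivative F (u t)) (at t within {0..})" using u(2) t by metis
    qed
    then show "\<exists>u. is_solution F u x0" by blast
    fix v and t :: real assume v: "is_solution F v x0" and t: "t \<ge> 0"
    have "\<forall>t\<ge>0. dist (v t) p < e1"
      by (rule confine[OF e1(1,2) mle x0e Thx0, of v F]) (use v in \<open>auto simp: is_solution_def\<close>)
    then show "dist (v t) p < \<epsilon>" using t e1 by force
  qed
qed

lemma not_asym: "\<not> asymptotically_stable F p"
proof
  assume "asymptotically_stable F p"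
  then obtain \<delta> where \<delta>: "\<delta> > 0" "\<forall>x0. dist x0 p < \<delta> \<longrightarrow> (\<forall>u. is_solution F u x0 \<longrightarrow> (u \<longlongrightarrow> p) at_top)"
    unfolding asymptotically_stable_def by blast
  define h where "h = \<delta> / (2 * (2 + th1 + th2))"
  have h: "h > 0" using \<delta> pos by (simp add: h_def)
  define q where "q = (xs + h * (1 + th2), ys - h * (1 + th1), 1/2::real)"
  have "dist q p = norm (h * (1 + th2), - (h * (1 + th1)), 0::real)"
    by (simp add: q_def p_def dist_norm)
  also have "\<dots> \<le> \<bar>h * (1 + th2)\<bar> + \<bar>- (h * (1 + th1))\<bar> + \<bar>0::real\<bar>" by (rule norm3_le)
  also have "\<dots> = h * (2 + th1 + th2)"
  proof -
    have a1: "h * (1 + th2) > 0" "h * (1 + th1) > 0" using h pos by simp_all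
    show ?thesis by (simp only: abs_minus_cancel abs_of_pos[OF a1(1)] abs_of_pos[OF a1(2)] abs_zero) (simp add: algebra_simps)
  qed
  also have "\<dots> = \<delta> / 2"
  proof -
    have "2 + th1 + th2 > 0" using pos by simp
    then show ?thesis by (simp add: h_def field_simps)
  qed
  also have "\<dots> < \<delta>" using \<delta> by simp
  finally have dq: "dist q p < \<delta>" .
  have Fq: "F q = 0"
  proof -
    have "(1 + th1) * (xs + h * (1 + th2)) + (1 + th2) * (ys - h * (1 + th1)) - 2 = 0"
      using eqL by (simp add: algebra_simps)
    then show ?thesis by (simp add: q_def F_eval zero_prod_def)
  qed
  have "is_solution F (\<lambda>t. q) q"
    unfolding is_solution_def Fq by (auto intro: has_vector_derivative_const)
  then have "((\<lambda>t::real. q) \<longlongrightarrow> p) at_top" using \<delta>(2) dq by blast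
  then have "q = p" by (simp add: tendsto_const_iff)
  moreover have "q \<noteq> p" using h pos by (simp add: q_def p_def)
  ultimately show False by simp
qed

end

theorem corollary1:
  fixes dPS1 dTR1 dPS2 dTR2 th1 th2 xs ys :: real
  assumes "dPS1 > 0" "dTR1 > 0" "dPS2 > 0" "dTR2 > 0" "th1 > 0" "th2 > 0"
    and "0 < xs" "xs < 1" "0 < ys" "ys < 1"
    and "(1 + th1) * xs + (1 + th2) * ys = 2"
  shows "neutrally_stable (pd_field dPS1 dTR1 dPS2 dTR2 th1 th2) (xs, ys, 1/2)"
proof -
  interpret pd dPS1 dTR1 dPS2 dTR2 th1 th2 xs ys by unfold_locales (use assms in auto)
  show ?thesis using lyap not_asym unfolding neutrally_stable_def p_def by simp
qed


end
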